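(* Let $S \subseteq \mathbb{R}^n$ be nonempty, closed and convex, and let $F_i = f_i + g_i$, $i=1,\dots,m$, where each $f_i \colon S \to \mathbb{R}$ is continuously differentiable and each $g_i \colon S \to \mathbb{R}$ is convex and continuous. For $\ell>0$ and $x \in S$ define \[ w_\ell(x) := \max_{y \in S} \min_{i = 1,\dots,m} \left\{ \nabla f_i(x)^\top (x - y) + g_i(x) - g_i(y) - \frac{\ell}{2}\|x - y\|^2 \right\}, \] and let $W_\ell(x)$ be the (unique) maximizer $y \in S$ attaining this maximum. Then, for all $\ell > 0$, $w_\ell$ and $W_\ell$ are continuous on $S$. *)

theory Defs
  imports "HOL-Analysis.Analysis"
begin

definition mo_phi ::
  "nat \<Rightarrow> (nat \<Rightarrow> real^'n \<Rightarrow> real^'n) \<Rightarrow> (nat \<Rightarrow> real^'n \<Rightarrow> real)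
    \<Rightarrow> real \<Rightarrow> real^'n \<Rightarrow> real^'n \<Rightarrow> real" where
  "mo_phi m Df g l x y =
     Min ((\<lambda>i. Df i x \<bullet> (x - y) + g i x - g i y - (l / 2) * (norm (x - y))^2) ` {1..m})"

definition w_val ::
  "(real^'n) set \<Rightarrow> nat \<Rightarrow> (nat \<Rightarrow> real^'n \<Rightarrow> real^'n) \<Rightarrow> (nat \<Rightarrow> real^'n \<Rightarrow> real)
    \<Rightarrow> real \<Rightarrow> real^'n \<Rightarrow> real" where
  "w_val S m Df g l x = (SUP y\<in>S. mo_phi m Df g l x y)"

definition W_map ::
  "(real^'n) set \<Rightarrow> nat \<Rightarrow> (nat \<Rightarrow> real^'n \<Rightarrow> real^'n) \<Rightarrow> (nat \<Rightarrow> real^'n \<Rightarrow> real)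
    \<Rightarrow> real \<Rightarrow> real^'n \<Rightarrow> real^'n" where
  "W_map S m Df g l x =
     (THE y. y \<in> S \<and> (\<forall>z\<in>S. mo_phi m Df g l x z \<le> mo_phi m Df g l x y))"

end

theory Submission
  imports Defs
begin

lemma continuous_on_Min_image:
  fixes f :: "'i \<Rightarrow> 'a::topological_space \<Rightarrow> real"
  assumes "finite I" "I \<noteq> {}" "\<And>i. i \<in> I \<Longrightarrow> continuous_on T (f i)"
  shows "continuous_on T (\<lambda>x. Min ((\<lambda>i. f i x) ` I))"
  using assms
proof (induction I rule: finite_ne_induct)
  case (singleton i)
  then show ?case by simp
next
  case (insert i F)
  have "continuous_on T (\<lambda>x. min (f i x) (Min ((\<lambda>i. f i x) ` F)))"
    using insert by (intro continuous_on_min) auto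
  moreover have "\<And>x. Min ((\<lambda>i. f i x) ` insert i F) = min (f i x) (Min ((\<lambda>i. f i x) ` F))"
    using insert by (simp add: Min_insert)
  ultimately show ?case by simp
qed

locale mo =
  fixes S :: "(real^'n) set"
    and m :: nat
    and Df :: "nat \<Rightarrow> real^'n \<Rightarrow> real^'n"
    and g :: "nat \<Rightarrow> real^'n \<Rightarrow> real"
    and l :: real
  assumes Sne: "S \<noteq> {}" and Scl: "closed S" and Scvx: "convex S"
    and m1: "m \<ge> 1"
    and Dcont: "\<And>i. i \<in> {1..m} \<Longrightarrow> continuous_on S (Df i)"
    and gcvx: "\<And>i. i \<in> {1..m} \<Longrightarrow> convex_on S (g i)"
    and gcont: "\<And>i. i \<in> {1..m} \<Longrightarrow> continuous_on S (g i)"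
    and lpos: "l > 0"
begin

definition tm :: "nat \<Rightarrow> real^'n \<Rightarrow> real^'n \<Rightarrow> real" where
  "tm i x y = Df i x \<bullet> (x - y) + g i x - g i y - (l / 2) * (norm (x - y))^2"

abbreviation phi where "phi \<equiv> mo_phi m Df g l"

lemma phi_def': "phi x y = Min ((\<lambda>i. tm i x y) ` {1..m})"
  by (simp add: mo_phi_def tm_def)

lemma phi_le: "i \<in> {1..m} \<Longrightarrow> phi x y \<le> tm i x y"
  unfolding phi_def' by (rule Min_le) auto

lemma phi_ge: "(\<And>i. i \<in> {1..m} \<Longrightarrow> c \<le> tm i x y) \<Longrightarrow> c \<le> phi x y"
  unfolding phi_def' using m1 by (subst Min_ge_iff) auto

lemma phi_xx: "phi x x = 0"
proof -
  have "phi x x \<le> 0" using phi_le[of 1 x x] m1 by (simp add: tm_def)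
  moreover have "0 \<le> phi x x" by (rule phi_ge) (simp add: tm_def)
  ultimately show ?thesis by simp
qed

lemma phi_cont2: "continuous_on (S \<times> S) (\<lambda>p. phi (fst p) (snd p))"
  unfolding phi_def'
proof (rule continuous_on_Min_image)
  show "finite {1..m}" by simp
  show "{1..m} \<noteq> {}" using m1 by simp
  fix i assume i: "i \<in> {1..m}"
  have D: "continuous_on (S \<times> S) (\<lambda>p. Df i (fst p))"
    by (rule continuous_on_compose2[OF Dcont[OF i]]) (auto intro!: continuous_intros)
  have G1: "continuous_on (S \<times> S) (\<lambda>p. g i (fst p))"
    by (rule continuous_on_compose2[OF gcont[OF i]]) (auto intro!: continuous_intros)
  have G2: "continuous_on (S \<times> S) (\<lambda>p. g i (snd p))"
    by (rule continuous_on_compose2[OF gcont[OF i]]) (auto intro!: continuous_intros)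
  show "continuous_on (S \<times> S) (\<lambda>p. tm i (fst p) (snd p))"
    unfolding tm_def by (intro continuous_intros D G1 G2)
qed

lemma phi_cont: "x \<in> S \<Longrightarrow> continuous_on S (phi x)"
  by (rule continuous_on_compose2[OF phi_cont2, of _ "\<lambda>y. (x, y)", simplified])
     (auto intro!: continuous_intros)

lemma mid_ineq:
  assumes x: "x \<in> S" and y: "y \<in> S" and y': "y' \<in> S"
  shows "phi x ((1/2) *\<^sub>R (y + y')) \<ge> (phi x y + phi x y') / 2 + (l/8) * (norm (y - y'))^2"
proof -
  define z where "z = (1/2) *\<^sub>R (y + y')"
  have "(phi x y + phi x y') / 2 + (l/8) * (norm (y - y'))^2 \<le> tm i x z" if i: "i \<in> {1..m}" for i
  proof -
    have gz: "g i z \<le> (g i y + g i y') / 2"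
      using convex_onD[OF gcvx[OF i], of "1/2" y y'] y y'
      by (simp add: scaleR_right_distrib z_def)
    have lin: "Df i x \<bullet> (x - z) = (Df i x \<bullet> (x - y) + Df i x \<bullet> (x - y')) / 2"
      by (simp add: z_def inner_diff_right inner_add_right inner_scaleR_right field_simps)
    have par: "(norm (x - z))^2 = ((norm (x - y))^2 + (norm (x - y'))^2) / 2 - (norm (y - y'))^2 / 4"
      by (simp add: z_def power2_norm_eq_inner inner_diff_left inner_diff_right inner_add_left inner_add_right
          inner_scaleR_left inner_scaleR_right inner_commute field_simps)
    have par2: "(l/2) * (norm (x - z))^2 = (l/4) * (norm (x - y))^2 + (l/4) * (norm (x - y'))^2 - (l/8) * (norm (y - y'))^2"
      unfolding par by (simp add: field_simps)
    have A: "tm i x z \<ge> (tm i x y + tm i x y') / 2 + (l/8) * (norm (y - y'))^2"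
      unfolding tm_def lin par2 using gz by (simp add: field_simps)
    have "phi x y \<le> tm i x y" "phi x y' \<le> tm i x y'" using phi_le[OF i] by auto
    then have B: "(phi x y + phi x y') / 2 \<le> (tm i x y + tm i x y') / 2" by simp
    have C: "(phi x y + phi x y') / 2 + (l/8) * (norm (y - y'))^2 \<le> (tm i x y + tm i x y') / 2 + (l/8) * (norm (y - y'))^2"
      using B by (rule add_right_mono)
    show ?thesis using order_trans[OF C A] .
  qed
  then have "(phi x y + phi x y') / 2 + (l/8) * (norm (y - y'))^2 \<le> phi x z"
    by (intro phi_ge)
  then show ?thesis by (simp add: z_def)
qed

lemma mid_in: "y \<in> S \<Longrightarrow> y' \<in> S \<Longrightarrow> (1/2) *\<^sub>R (y + y') \<in> S"
  using convexD[OF Scvx, of y y' "1/2" "1/2"] by (simp add: scaleR_right_distrib)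

lemma strong:
  assumes x: "x \<in> S" and y: "y \<in> S" and mx: "\<forall>z\<in>S. phi x z \<le> phi x y" and z: "z \<in> S"
  shows "phi x z \<le> phi x y - (l/4) * (norm (z - y))^2"
proof -
  have A: "phi x ((1/2) *\<^sub>R (z + y)) \<le> phi x y" using mx mid_in[OF z y] by blast
  have B: "phi x ((1/2) *\<^sub>R (z + y)) \<ge> (phi x z + phi x y) / 2 + (l/8) * (norm (z - y))^2"
    by (rule mid_ineq[OF x z y])
  from A B show ?thesis by (simp add: field_simps)
qed

lemma exists_max:
  assumes x: "x \<in> S"
  shows "\<exists>y\<in>S. \<forall>z\<in>S. phi x z \<le> phi x y"
proof -
  have one: "(1::nat) \<in> {1..m}" using m1 by simp
  define a where "a z = Df 1 x \<bullet> (x - z) + g 1 x - g 1 z" for z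
  have tm1: "tm 1 x z = a z - (l/2) * (norm (z - x))^2" for z
    by (simp add: tm_def a_def norm_minus_commute)
  have acont: "continuous_on S a"
    unfolding a_def by (intro continuous_intros gcont[OF one])
  define K1 where "K1 = S \<inter> cball x 1"
  have K1c: "compact K1" unfolding K1_def using Scl by (intro closed_Int_compact) auto
  have K1ne: "K1 \<noteq> {}" unfolding K1_def using x by auto
  obtain s where s: "s \<in> K1" "\<forall>w\<in>K1. a w \<le> a s"
    using continuous_attains_sup[OF K1c K1ne continuous_on_subset[OF acont]] K1_def by auto
  define C where "C = \<bar>a s\<bar>"
  have C0: "C \<ge> 0" by (simp add: C_def)
  have aK: "a w \<le> C" if "w \<in> K1" for w using s that C_def by force
  have abound: "a z \<le> norm (z - x) * C" if z: "z \<in> S" and r1: "norm (z - x) > 1" for z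
  proof -
    define r where "r = norm (z - x)"
    define t where "t = 1 / r"
    have rpos: "r > 0" using r1 r_def by auto
    have r1': "r > 1" using r1 r_def by simp
    have t01: "0 \<le> t" "t \<le> 1" unfolding t_def using r1' rpos by auto
    define w where "w = (1 - t) *\<^sub>R x + t *\<^sub>R z"
    have wS: "w \<in> S" unfolding w_def using convexD[OF Scvx x z, of "1 - t" t] t01 by simp
    have wx: "w - x = t *\<^sub>R (z - x)" unfolding w_def by (simp add: algebra_simps)
    have nw: "norm (w - x) = 1" unfolding wx t_def r_def using r1 rpos r_def by simp
    have wK: "w \<in> K1" unfolding K1_def using wS nw by (simp add: dist_norm norm_minus_commute)
    have gw: "g 1 w \<le> (1 - t) * g 1 x + t * g 1 z"
      unfolding w_def by (rule convex_onD[OF gcvx[OF one] t01 x z])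
    have "Df 1 x \<bullet> (x - w) = - t * (Df 1 x \<bullet> (z - x))"
      using wx by (metis inner_minus_right inner_scaleR_right minus_diff_eq mult_minus_left)
    then have "a w \<ge> t * a z" unfolding a_def using gw
      by (simp add: algebra_simps inner_diff_right)
    then have "t * a z \<le> C" using aK[OF wK] by linarith
    then have "r * (t * a z) \<le> r * C" using rpos by (simp add: mult_left_mono)
    then show ?thesis using rpos by (simp add: t_def r_def)
  qed
  define R0 where "R0 = 1 + 2 * C / l"
  have R01: "R0 \<ge> 1" using C0 lpos by (simp add: R0_def)
  have neg: "phi x z < 0" if z: "z \<in> S" and r: "norm (z - x) > R0" for z
  proof -
    define r where "r = norm (z - x)"
    have r1: "r > 1" using r R01 r_def by simp
    have "(l/2) * r > C"
    proof -
      have "r > 1 + 2 * C / l" using r r_def R0_def by simp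
      then have "l * r > l + 2 * C" using lpos by (simp add: field_simps)
      then show ?thesis using lpos by simp
    qed
    then have "r * C - (l/2) * r^2 < 0"
    proof -
      assume "(l/2) * r > C"
      then have "r * C < r * ((l/2) * r)" using r1 by simp
      then show ?thesis by (simp add: power2_eq_square algebra_simps)
    qed
    moreover have "phi x z \<le> tm 1 x z" by (rule phi_le[OF one])
    moreover have "a z \<le> r * C" using abound[OF z] r1 r_def by simp
    ultimately show ?thesis unfolding tm1 r_def by simp
  qed
  define T where "T = S \<inter> phi x -` {0..}"
  have Tcl: "closed T" unfolding T_def
    by (rule continuous_closed_preimage[OF phi_cont[OF x] Scl]) simp
  have Tb: "T \<subseteq> cball x R0"
  proof
    fix z assume "z \<in> T"
    then have "z \<in> S" "phi x z \<ge> 0" unfolding T_def by auto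
    then have "\<not> norm (z - x) > R0" using neg by force
    then show "z \<in> cball x R0" by (simp add: dist_norm norm_minus_commute)
  qed
  have Tc: "compact T" using Tcl Tb by (meson bounded_cball bounded_subset compact_eq_bounded_closed)
  have xT: "x \<in> T" unfolding T_def using x phi_xx by simp
  obtain y where y: "y \<in> T" "\<forall>z\<in>T. phi x z \<le> phi x y"
    using continuous_attains_sup[OF Tc _ continuous_on_subset[OF phi_cont[OF x]]] xT T_def by blast
  have "phi x z \<le> phi x y" if z: "z \<in> S" for z
  proof (cases "z \<in> T")
    case True then show ?thesis using y by blast
  next
    case False
    then have "phi x z < 0" using z T_def by auto
    moreover have "phi x x \<le> phi x y" using y xT by blast
    ultimately show ?thesis using phi_xx by simp
  qed
  then show ?thesis using y T_def by blast
qed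

abbreviation W where "W \<equiv> W_map S m Df g l"

lemma W_prop:
  assumes x: "x \<in> S"
  shows "W x \<in> S \<and> (\<forall>z\<in>S. phi x z \<le> phi x (W x))"
proof -
  have "\<exists>!y. y \<in> S \<and> (\<forall>z\<in>S. phi x z \<le> phi x y)"
  proof (rule ex_ex1I)
    show "\<exists>y. y \<in> S \<and> (\<forall>z\<in>S. phi x z \<le> phi x y)" using exists_max[OF x] by blast
  next
    fix y1 y2 assume 1: "y1 \<in> S \<and> (\<forall>z\<in>S. phi x z \<le> phi x y1)"
      and 2: "y2 \<in> S \<and> (\<forall>z\<in>S. phi x z \<le> phi x y2)"
    have "phi x y2 \<le> phi x y1 - (l/4) * (norm (y2 - y1))^2"
      using strong[OF x] 1 2 by blast
    moreover have "phi x y1 \<le> phi x y2" using 1 2 by blast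
    ultimately have "(l/4) * (norm (y2 - y1))^2 \<le> 0" by linarith
    then have "(norm (y2 - y1))^2 \<le> 0" using lpos by (simp add: mult_le_0_iff)
    then show "y1 = y2" by simp
  qed
  then show ?thesis unfolding W_map_def by (rule theI')
qed

lemma w_eq: "x \<in> S \<Longrightarrow> w_val S m Df g l x = phi x (W x)"
  unfolding w_val_def using W_prop[of x] by (intro cSup_eq_maximum) auto

definition Dd :: "real^'n \<Rightarrow> real^'n \<Rightarrow> real" where
  "Dd x x' = (\<Sum>i\<in>{1..m}. norm (Df i x - Df i x') + \<bar>g i x - g i x'\<bar>) + norm (x - x')"

definition Kc :: "real^'n \<Rightarrow> real" where
  "Kc x = 3 + l + (\<Sum>i\<in>{1..m}. norm (Df i x))"

lemma Kc_pos: "Kc x > 0"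
  unfolding Kc_def using lpos by (simp add: add_pos_nonneg sum_nonneg)

lemma Dd_nonneg: "Dd x x' \<ge> 0"
  unfolding Dd_def by (intro add_nonneg_nonneg sum_nonneg) auto

lemma Dd_xx: "Dd x x = 0"
  unfolding Dd_def by simp

lemma Dd_cont: "x \<in> S \<Longrightarrow> continuous_on S (Dd x)"
  unfolding Dd_def by (intro continuous_intros Dcont gcont) auto

lemma tm_diff:
  assumes i: "i \<in> {1..m}" and D1: "Dd x x' \<le> 1"
  shows "\<bar>tm i x z - tm i x' z\<bar> \<le> Dd x x' * Kc x * (1 + norm (x - z))"
proof -
  define D where "D = Dd x x'"
  define B where "B = (\<Sum>i\<in>{1..m}. norm (Df i x))"
  define e where "e = x - x'"
  define u where "u = x - z"
  define dD where "dD = norm (Df i x - Df i x')"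
  define dg where "dg = \<bar>g i x - g i x'\<bar>"
  define P where "P = D * norm u"
  have sum_le: "(norm (Df i x - Df i x') + \<bar>g i x - g i x'\<bar>)
      \<le> (\<Sum>i\<in>{1..m}. norm (Df i x - Df i x') + \<bar>g i x - g i x'\<bar>)"
    using i by (intro member_le_sum) auto
  have sn: "(\<Sum>i\<in>{1..m}. norm (Df i x - Df i x') + \<bar>g i x - g i x'\<bar>) \<ge> 0"
    by (intro sum_nonneg) auto
  have dDD: "dD \<le> D" and dgD: "dg \<le> D" and deD: "norm e \<le> D"
    using sum_le sn norm_ge_zero[of "x - x'"] norm_ge_zero[of "Df i x - Df i x'"] abs_ge_zero[of "g i x - g i x'"]
    unfolding D_def Dd_def dD_def dg_def e_def by linarith+
  have D0: "D \<ge> 0" unfolding D_def by (rule Dd_nonneg)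
  have D1': "D \<le> 1" using D1 D_def by simp
  have B0: "B \<ge> 0" unfolding B_def by (intro sum_nonneg) auto
  have nB: "norm (Df i x) \<le> B" unfolding B_def using i by (intro member_le_sum) auto
  have x'z: "x' - z = u - e" unfolding u_def e_def by simp
  have iden: "tm i x z - tm i x' z = (Df i x - Df i x') \<bullet> u + Df i x' \<bullet> e + (g i x - g i x')
      - (l/2) * (2 * (u \<bullet> e) - (norm e)^2)"
  proof -
    have n1: "(norm (x' - z))^2 = (norm u)^2 - 2 * (u \<bullet> e) + (norm e)^2"
      unfolding x'z by (simp add: power2_norm_eq_inner inner_diff_left inner_diff_right inner_commute)
    have i1: "Df i x' \<bullet> (x' - z) = Df i x' \<bullet> u - Df i x' \<bullet> e"
      unfolding x'z by (simp add: inner_diff_right)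
    show ?thesis unfolding tm_def n1 i1 u_def[symmetric]
      by (simp add: inner_diff_left algebra_simps)
  qed
  have t1: "\<bar>(Df i x - Df i x') \<bullet> u\<bar> \<le> P"
  proof -
    have "\<bar>(Df i x - Df i x') \<bullet> u\<bar> \<le> dD * norm u" unfolding dD_def by (rule Cauchy_Schwarz_ineq2)
    also have "\<dots> \<le> D * norm u" using dDD by (simp add: mult_right_mono)
    finally show ?thesis by (simp add: P_def)
  qed
  have t2: "\<bar>Df i x' \<bullet> e\<bar> \<le> B * D + D"
  proof -
    have "norm (Df i x') \<le> norm (Df i x) + dD"
      unfolding dD_def by (metis add.commute norm_triangle_sub norm_minus_commute)
    then have nx': "norm (Df i x') \<le> B + 1" using nB dDD D1' by linarith
    have "\<bar>Df i x' \<bullet> e\<bar> \<le> norm (Df i x') * norm e" by (rule Cauchy_Schwarz_ineq2)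
    also have "\<dots> \<le> (B + 1) * D" using nx' deD B0 by (intro mult_mono) auto
    finally show ?thesis by (simp add: algebra_simps)
  qed
  have t3: "\<bar>u \<bullet> e\<bar> \<le> P"
  proof -
    have "\<bar>u \<bullet> e\<bar> \<le> norm u * norm e" by (rule Cauchy_Schwarz_ineq2)
    also have "\<dots> \<le> norm u * D" using deD by (simp add: mult_left_mono)
    finally show ?thesis by (simp add: P_def mult.commute)
  qed
  have t4: "(norm e)^2 \<le> D"
  proof -
    have "(norm e)^2 \<le> norm e * 1" unfolding power2_eq_square
      using deD D1' by (intro mult_left_mono) auto
    then show ?thesis using deD by simp
  qed
  have lt3: "\<bar>l * (u \<bullet> e)\<bar> \<le> l * P" using t3 lpos by (simp add: abs_mult mult_left_mono)
  have lt4: "l * (norm e)^2 \<le> l * D" using t4 lpos by (simp add: mult_left_mono)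
  have lt4': "l * (norm e)^2 \<ge> 0" using lpos by simp
  have rhs: "Dd x x' * Kc x * (1 + norm (x - z)) = 3 * D + l * D + B * D + 3 * P + l * P + B * P"
    unfolding D_def[symmetric] Kc_def B_def[symmetric] P_def u_def by (simp add: algebra_simps)
  have pos: "l * D \<ge> 0" "B * D \<ge> 0" "l * P \<ge> 0" "B * P \<ge> 0" "P \<ge> 0"
    using lpos D0 B0 unfolding P_def by auto
  have iden2: "tm i x z - tm i x' z = (Df i x - Df i x') \<bullet> u + Df i x' \<bullet> e + (g i x - g i x')
      - l * (u \<bullet> e) + (l * (norm e)^2) / 2"
    unfolding iden by (simp add: algebra_simps)
  show ?thesis unfolding rhs iden2 using t1 t2 dgD lt3 lt4 lt4' pos D0 unfolding dg_def
    by linarith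
qed

lemma phi_diff:
  assumes D1: "Dd x x' \<le> 1"
  shows "\<bar>phi x z - phi x' z\<bar> \<le> Dd x x' * Kc x * (1 + norm (x - z))"
proof -
  define E where "E = Dd x x' * Kc x * (1 + norm (x - z))"
  have "phi x z - E \<le> phi x' z"
  proof (rule phi_ge)
    fix i assume i: "i \<in> {1..m}"
    have "phi x z \<le> tm i x z" by (rule phi_le[OF i])
    then show "phi x z - E \<le> tm i x' z" using tm_diff[OF i D1, of z] E_def by linarith
  qed
  moreover have "phi x' z - E \<le> phi x z"
  proof (rule phi_ge)
    fix i assume i: "i \<in> {1..m}"
    have "phi x' z \<le> tm i x' z" by (rule phi_le[OF i])
    then show "phi x' z - E \<le> tm i x z" using tm_diff[OF i D1, of z] E_def by linarith
  qed
  ultimately show ?thesis unfolding E_def by linarith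
qed

lemma key:
  assumes x: "x \<in> S" and x': "x' \<in> S" and D1: "Dd x x' \<le> 1"
  shows "(l/2) * (norm (W x' - W x))^2
     \<le> (Dd x x' * Kc x) * (2 + 2 * norm (x - W x) + norm (W x' - W x))"
proof -
  define y where "y = W x"
  define y' where "y' = W x'"
  define d where "d = norm (y' - y)"
  define n where "n = norm (x - y)"
  define E where "E = Dd x x' * Kc x"
  have E0: "E \<ge> 0" unfolding E_def using Dd_nonneg Kc_pos by (simp add: less_imp_le)
  have yS: "y \<in> S" and ymax: "\<forall>z\<in>S. phi x z \<le> phi x y" using W_prop[OF x] y_def by auto
  have y'S: "y' \<in> S" and y'max: "\<forall>z\<in>S. phi x' z \<le> phi x' y'" using W_prop[OF x'] y'_def by auto
  have s1: "phi x y' \<le> phi x y - (l/4) * d^2" using strong[OF x yS ymax y'S] d_def by simp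
  have s2: "phi x' y \<le> phi x' y' - (l/4) * d^2" using strong[OF x' y'S y'max yS] d_def
    by (simp add: norm_minus_commute)
  have b1: "\<bar>phi x y - phi x' y\<bar> \<le> E * (1 + n)" using phi_diff[OF D1, of y] E_def n_def by simp
  have b2: "\<bar>phi x y' - phi x' y'\<bar> \<le> E * (1 + norm (x - y'))" using phi_diff[OF D1, of y'] E_def by simp
  have "norm (x - y') \<le> n + d"
  proof -
    have "x - y' = (x - y) + (y - y')" by simp
    then have "norm (x - y') \<le> norm (x - y) + norm (y - y')" by (metis norm_triangle_ineq)
    then show ?thesis unfolding n_def d_def by (simp add: norm_minus_commute)
  qed
  then have b3: "E * (1 + norm (x - y')) \<le> E * (1 + n + d)" using E0 by (intro mult_left_mono) auto
  have eq: "E * (2 + 2 * n + d) = E * (1 + n) + E * (1 + n + d)" by (simp add: algebra_simps)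
  define Q where "Q = l * d^2"
  have q1: "(l/4) * d^2 = Q / 4" "(l/2) * d^2 = Q / 2" unfolding Q_def by simp_all
  have "(l/2) * d^2 \<le> E * (2 + 2 * n + d)"
    using s1 s2 b1 b2 b3 eq q1 by linarith
  then show ?thesis unfolding E_def n_def d_def y_def y'_def .
qed

lemma W_cont: "continuous_on S W"
  unfolding continuous_on_iff
proof (intro ballI allI impI)
  fix x :: "real^'n" and \<epsilon> :: real
  assume x: "x \<in> S" and ep: "\<epsilon> > 0"
  define A where "A = 2 + 2 * norm (x - W x)"
  define K where "K = Kc x"
  have A0: "A \<ge> 0" unfolding A_def by simp
  have K0: "K > 0" unfolding K_def by (rule Kc_pos)
  define F where "F = K * (A / \<epsilon> + 1)"
  have "A / \<epsilon> \<ge> 0" using A0 ep by simp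
  then have F0: "F > 0" unfolding F_def using K0 by (intro mult_pos_pos) auto
  define \<delta>0 where "\<delta>0 = min 1 (l * \<epsilon> / (2 * F))"
  have d00: "\<delta>0 > 0" unfolding \<delta>0_def using lpos ep F0 by simp
  obtain \<delta> where dpos: "\<delta> > 0" and dd: "\<forall>x'\<in>S. dist x' x < \<delta> \<longrightarrow> dist (Dd x x') (Dd x x) < \<delta>0"
    using Dd_cont[OF x] x d00 unfolding continuous_on_iff by metis
  show "\<exists>\<delta>>0. \<forall>x'\<in>S. dist x' x < \<delta> \<longrightarrow> dist (W x') (W x) < \<epsilon>"
  proof (intro exI[of _ \<delta>] conjI ballI impI dpos)
    fix x' assume x': "x' \<in> S" and dx: "dist x' x < \<delta>"
    define D where "D = Dd x x'"
    have Dlt: "D < \<delta>0" using dd x' dx Dd_xx Dd_nonneg unfolding D_def by (auto simp: dist_real_def)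
    have D0: "D \<ge> 0" unfolding D_def by (rule Dd_nonneg)
    have D1: "D \<le> 1" using Dlt \<delta>0_def by simp
    define d where "d = norm (W x' - W x)"
    have k: "(l/2) * d^2 \<le> (D * K) * (A + d)"
      using key[OF x x'] D1 unfolding D_def K_def A_def d_def by simp
    show "dist (W x') (W x) < \<epsilon>"
    proof (rule ccontr)
      assume "\<not> dist (W x') (W x) < \<epsilon>"
      then have de: "d \<ge> \<epsilon>" unfolding d_def by (simp add: dist_norm)
      then have dpos': "d > 0" using ep by simp
      have "A \<le> (A / \<epsilon>) * d"
      proof -
        have "A = (A / \<epsilon>) * \<epsilon>" using ep by simp
        also have "\<dots> \<le> (A / \<epsilon>) * d" using de A0 ep by (intro mult_left_mono) auto
        finally show ?thesis .
      qed
      then have "A + d \<le> (A / \<epsilon> + 1) * d" by (simp add: algebra_simps)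
      then have "(D * K) * (A + d) \<le> (D * K) * ((A / \<epsilon> + 1) * d)"
        using D0 K0 by (intro mult_left_mono) auto
      also have "\<dots> = (D * F) * d" unfolding F_def by (simp add: algebra_simps)
      also have "\<dots> < (l * \<epsilon> / 2) * d"
      proof -
        have "D * F < \<delta>0 * F" using Dlt F0 by simp
        also have "\<delta>0 * F \<le> (l * \<epsilon> / (2 * F)) * F" unfolding \<delta>0_def using F0 by (intro mult_right_mono) auto
        also have "\<dots> = l * \<epsilon> / 2" using F0 by simp
        finally show ?thesis using dpos' by simp
      qed
      also have "\<dots> \<le> (l * d / 2) * d" using de lpos dpos' by (intro mult_right_mono) auto
      finally have "(l/2) * d^2 < (l * d / 2) * d" using k by linarith
      then show False by (simp add: power2_eq_square)
    qed
  qed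
qed

lemma w_cont: "continuous_on S (w_val S m Df g l)"
proof -
  have "continuous_on S (\<lambda>x. phi x (W x))"
    by (rule continuous_on_compose2[OF phi_cont2, of _ "\<lambda>x. (x, W x)", simplified])
       (auto intro!: continuous_intros W_cont simp: W_prop)
  then show ?thesis by (rule continuous_on_cong[THEN iffD1, rotated 2]) (auto simp: w_eq)
qed

end
theorem theorem3p12:
  fixes S :: "(real^'n) set"
    and m :: nat
    and f g :: "nat \<Rightarrow> real^'n \<Rightarrow> real"
    and Df :: "nat \<Rightarrow> real^'n \<Rightarrow> real^'n"
    and l :: real
  assumes "S \<noteq> {}" and "closed S" and "convex S"
    and "m \<ge> 1"
    and "\<And>i x. i \<in> {1..m} \<Longrightarrow> x \<in> S \<Longrightarrow>
           (f i has_derivative (\<lambda>h. Df i x \<bullet> h)) (at x)"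
    and "\<And>i. i \<in> {1..m} \<Longrightarrow> continuous_on S (Df i)"
    and "\<And>i. i \<in> {1..m} \<Longrightarrow> convex_on S (g i)"
    and "\<And>i. i \<in> {1..m} \<Longrightarrow> continuous_on S (g i)"
    and "l > 0"
  shows "continuous_on S (w_val S m Df g l) \<and> continuous_on S (W_map S m Df g l)"
proof -
  interpret mo S m Df g l
    using assms by unfold_locales auto
  show ?thesis using w_cont W_cont by simp
qed

end
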